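(* Suppose that $\Re s=1$, $u\ge1$, and $|s|>u$. For integers $m,\nu\ge1$, \[ \left|\frac{\partial^\nu}{\partial u^\nu}\left(G(u,s)^m\right)\right|\ll_{m,\nu}\frac{(1+\log|s|)^{m-1}}{u^\nu}\left(\frac{|s|}{u}\right)^{\nu-1}, \] with implied constant depending only on $m,\nu$.
   Context: $G(u,s):=\int_{0}^{1/u}\frac{1-e^{-ts}}{t}\,dt$. *)

theory Defs
  imports "HOL-Analysis.Analysis"
begin

definition G :: "real \<Rightarrow> complex \<Rightarrow> complex" where
  "G u s = integral {0..1/u} (\<lambda>t::real. (1 - exp (- (complex_of_real t * s))) / complex_of_real t)"

fun nderiv :: "nat \<Rightarrow> (real \<Rightarrow> complex) \<Rightarrow> real \<Rightarrow> complex" where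
  "nderiv 0 f = f"
| "nderiv (Suc n) f = (\<lambda>x. vector_derivative (nderiv n f) (at x))"

end

theory Submission
  imports Defs "HOL-Complex_Analysis.Weierstrass_Factorization"
begin


definition RR :: "complex \<Rightarrow> real \<Rightarrow> bool" where
  "RR s u \<longleftrightarrow> Re s = 1 \<and> 1 \<le> u \<and> u < cmod s"

definition LL :: "complex \<Rightarrow> real" where "LL s = 1 + ln (cmod s)"

definition bnd :: "nat \<Rightarrow> nat \<Rightarrow> nat \<Rightarrow> (complex \<Rightarrow> real \<Rightarrow> complex) \<Rightarrow> bool" where
  "bnd a b l f \<longleftrightarrow> (\<exists>C\<ge>0. \<forall>s u. RR s u \<longrightarrow> cmod (f s u) \<le> C * LL s ^ l * cmod s ^ a / u ^ b)"

fun good :: "nat \<Rightarrow> nat \<Rightarrow> nat \<Rightarrow> nat \<Rightarrow> (complex \<Rightarrow> real \<Rightarrow> complex) \<Rightarrow> bool" where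
  "good 0 a b l f = bnd a b l f"
| "good (Suc N) a b l f = (bnd a b l f \<and> (\<exists>f'. (\<forall>s u. 0 < u \<longrightarrow> (f s has_vector_derivative f' s u) (at u))
        \<and> good N (Suc a) (b+2) l f'))"

lemma RR_facts: assumes "RR s u" shows "1 \<le> u" "u < cmod s" "1 \<le> LL s" "0 < u" "1 < cmod s"
  using assms unfolding RR_def LL_def by auto

lemma good_bnd: "good N a b l f \<Longrightarrow> bnd a b l f"
  by (cases N) auto

lemma good_down: "good (Suc N) a b l f \<Longrightarrow> good N a b l f"
proof (induction N arbitrary: a b f)
  case 0 then show ?case by simp
next
  case (Suc N) then show ?case by (metis good.simps(2))
qed

lemma bnd_weak: assumes "bnd a b l f" shows "bnd (Suc a) (Suc b) l f"
proof -
  obtain C where C: "C \<ge> 0" "\<And>s u. RR s u \<Longrightarrow> cmod (f s u) \<le> C * LL s ^ l * cmod s ^ a / u ^ b"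
    using assms unfolding bnd_def by blast
  { fix s u assume r: "RR s u"
    note F = RR_facts[OF r]
    have "C * LL s ^ l * cmod s ^ a / u ^ b = C * LL s ^ l * cmod s ^ a / u ^ b * 1" by simp
    also have "\<dots> \<le> C * LL s ^ l * cmod s ^ a / u ^ b * (cmod s / u)"
      apply (rule mult_left_mono) using F C by auto
    also have "\<dots> = C * LL s ^ l * cmod s ^ Suc a / u ^ Suc b" by (simp add: field_simps)
    finally have "cmod (f s u) \<le> C * LL s ^ l * cmod s ^ Suc a / u ^ Suc b" using C(2)[OF r] by linarith }
  then show ?thesis unfolding bnd_def using C by blast
qed

lemma bnd_mono: assumes "bnd a b l f" "l \<le> l'" shows "bnd a b l' f"
proof -
  obtain C where C: "C \<ge> 0" "\<And>s u. RR s u \<Longrightarrow> cmod (f s u) \<le> C * LL s ^ l * cmod s ^ a / u ^ b"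
    using assms unfolding bnd_def by blast
  { fix s u assume r: "RR s u"
    note F = RR_facts[OF r]
    have "LL s ^ l \<le> LL s ^ l'" using F assms(2) by (simp add: power_increasing)
    then have "C * LL s ^ l * cmod s ^ a / u ^ b \<le> C * LL s ^ l' * cmod s ^ a / u ^ b"
      using C F by (intro divide_right_mono mult_right_mono mult_left_mono) auto
    then have "cmod (f s u) \<le> C * LL s ^ l' * cmod s ^ a / u ^ b" using C(2)[OF r] by linarith }
  then show ?thesis unfolding bnd_def using C by blast
qed

lemma bnd_add: assumes "bnd a b l f" "bnd a b l g" shows "bnd a b l (\<lambda>s u. f s u + g s u)"
proof -
  obtain C where C: "C \<ge> 0" "\<And>s u. RR s u \<Longrightarrow> cmod (f s u) \<le> C * LL s ^ l * cmod s ^ a / u ^ b"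
    using assms unfolding bnd_def by blast
  obtain D where D: "D \<ge> 0" "\<And>s u. RR s u \<Longrightarrow> cmod (g s u) \<le> D * LL s ^ l * cmod s ^ a / u ^ b"
    using assms unfolding bnd_def by blast
  { fix s u assume r: "RR s u"
    have "cmod (f s u + g s u) \<le> cmod (f s u) + cmod (g s u)" by (rule norm_triangle_ineq)
    also have "\<dots> \<le> (C + D) * LL s ^ l * cmod s ^ a / u ^ b" using C(2)[OF r] D(2)[OF r]
      by (simp add: field_simps add_divide_distrib)
    finally have "cmod (f s u + g s u) \<le> (C + D) * LL s ^ l * cmod s ^ a / u ^ b" . }
  then show ?thesis unfolding bnd_def using C D by (intro exI[of _ "C+D"]) auto
qed

lemma bnd_cmult: assumes "bnd a b l f" shows "bnd a b l (\<lambda>s u. c * f s u)"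
proof -
  obtain C where C: "C \<ge> 0" "\<And>s u. RR s u \<Longrightarrow> cmod (f s u) \<le> C * LL s ^ l * cmod s ^ a / u ^ b"
    using assms unfolding bnd_def by blast
  { fix s u assume r: "RR s u"
    have "cmod (c * f s u) = cmod c * cmod (f s u)" by (simp add: norm_mult)
    also have "\<dots> \<le> cmod c * (C * LL s ^ l * cmod s ^ a / u ^ b)" using C(2)[OF r]
      by (intro mult_left_mono) auto
    finally have "cmod (c * f s u) \<le> (cmod c * C) * LL s ^ l * cmod s ^ a / u ^ b" by simp }
  then show ?thesis unfolding bnd_def using C by (intro exI[of _ "cmod c * C"]) auto
qed

lemma bnd_mult: assumes "bnd a b l f" "bnd a' b' l' g"
  shows "bnd (a+a') (b+b') (l+l') (\<lambda>s u. f s u * g s u)"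
proof -
  obtain C where C: "C \<ge> 0" "\<And>s u. RR s u \<Longrightarrow> cmod (f s u) \<le> C * LL s ^ l * cmod s ^ a / u ^ b"
    using assms unfolding bnd_def by blast
  obtain D where D: "D \<ge> 0" "\<And>s u. RR s u \<Longrightarrow> cmod (g s u) \<le> D * LL s ^ l' * cmod s ^ a' / u ^ b'"
    using assms unfolding bnd_def by blast
  { fix s u assume r: "RR s u"
    have "cmod (f s u * g s u) = cmod (f s u) * cmod (g s u)" by (simp add: norm_mult)
    also have "\<dots> \<le> (C * LL s ^ l * cmod s ^ a / u ^ b) * (D * LL s ^ l' * cmod s ^ a' / u ^ b')"
      using C(2)[OF r] D(2)[OF r] order_trans[OF norm_ge_zero C(2)[OF r]] by (intro mult_mono) auto
    also have "\<dots> = (C * D) * LL s ^ (l+l') * cmod s ^ (a+a') / u ^ (b+b')"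
      by (simp add: power_add field_simps)
    finally have "cmod (f s u * g s u) \<le> (C * D) * LL s ^ (l+l') * cmod s ^ (a+a') / u ^ (b+b')" . }
  then show ?thesis unfolding bnd_def using C D by (intro exI[of _ "C*D"]) auto
qed

lemma bnd_zero: "bnd a b l (\<lambda>s u. 0)"
  unfolding bnd_def by (intro exI[of _ 0]) auto

lemma bnd_const: "bnd 0 0 0 (\<lambda>s u. c)"
  unfolding bnd_def by (intro exI[of _ "cmod c"]) auto

lemma bnd_s: "bnd 1 0 0 (\<lambda>s u. s)"
  unfolding bnd_def by (intro exI[of _ 1]) auto

lemma good_zero: "good N a b l (\<lambda>s u. 0)"
proof (induction N arbitrary: a b)
  case 0 then show ?case by (simp add: bnd_zero)
next
  case (Suc N) then show ?case by (auto simp: bnd_zero intro!: exI[of _ "\<lambda>s u. 0"])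
qed

lemma good_const: "good N 0 0 0 (\<lambda>s u. c)"
  by (cases N) (auto simp: bnd_const good_zero intro!: exI[of _ "\<lambda>s u. 0"])

lemma good_s: "good N 1 0 0 (\<lambda>s u. s)"
  using bnd_s by (cases N) (auto simp: bnd_s good_zero intro!: exI[of _ "\<lambda>s u. 0"])

lemma good_weak: "good N a b l f \<Longrightarrow> good N (Suc a) (Suc b) l f"
proof (induction N arbitrary: a b f)
  case 0 then show ?case by (simp add: bnd_weak)
next
  case (Suc N)
  from Suc.prems obtain f' where "\<forall>s u. 0 < u \<longrightarrow> (f s has_vector_derivative f' s u) (at u)"
    "good N (Suc a) (b+2) l f'" "bnd a b l f" by auto
  then show ?case using Suc.IH[of "Suc a" "b+2" f'] by (auto intro: bnd_weak)
qed

lemma good_mono: "good N a b l f \<Longrightarrow> l \<le> l' \<Longrightarrow> good N a b l' f"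
proof (induction N arbitrary: a b f)
  case 0 then show ?case by (simp add: bnd_mono)
next
  case (Suc N)
  from Suc.prems obtain f' where "\<forall>s u. 0 < u \<longrightarrow> (f s has_vector_derivative f' s u) (at u)"
    "good N (Suc a) (b+2) l f'" "bnd a b l f" by auto
  then show ?case using Suc.IH[of "Suc a" "b+2" f'] Suc.prems by (auto intro: bnd_mono)
qed

lemma good_add: "good N a b l f \<Longrightarrow> good N a b l g \<Longrightarrow> good N a b l (\<lambda>s u. f s u + g s u)"
proof (induction N arbitrary: a b f g)
  case 0 then show ?case by (simp add: bnd_add)
next
  case (Suc N)
  from Suc.prems(1) obtain f' where f': "\<forall>s u. 0 < u \<longrightarrow> (f s has_vector_derivative f' s u) (at u)"
    "good N (Suc a) (b+2) l f'" "bnd a b l f" by auto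
  from Suc.prems(2) obtain g' where g': "\<forall>s u. 0 < u \<longrightarrow> (g s has_vector_derivative g' s u) (at u)"
    "good N (Suc a) (b+2) l g'" "bnd a b l g" by auto
  show ?case
    apply (simp add: bnd_add f' g')
    apply (rule exI[of _ "\<lambda>s u. f' s u + g' s u"])
    using f' g' Suc.IH by (auto intro!: has_vector_derivative_add)
qed

lemma good_cmult: "good N a b l f \<Longrightarrow> good N a b l (\<lambda>s u. c * f s u)"
proof (induction N arbitrary: a b f)
  case 0 then show ?case by (simp add: bnd_cmult)
next
  case (Suc N)
  from Suc.prems(1) obtain f' where f': "\<forall>s u. 0 < u \<longrightarrow> (f s has_vector_derivative f' s u) (at u)"
    "good N (Suc a) (b+2) l f'" "bnd a b l f" by auto
  show ?case
    apply (simp add: bnd_cmult f')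
    apply (rule exI[of _ "\<lambda>s u. c * f' s u"])
    using f' Suc.IH by (auto intro!: has_vector_derivative_mult_right)
qed

lemma good_mult: "good N a b l f \<Longrightarrow> good N a' b' l' g \<Longrightarrow>
   good N (a+a') (b+b') (l+l') (\<lambda>s u. f s u * g s u)"
proof (induction N arbitrary: a b l f a' b' l' g)
  case 0 then show ?case by (simp add: bnd_mult)
next
  case (Suc N)
  from Suc.prems(1) obtain f' where f': "\<forall>s u. 0 < u \<longrightarrow> (f s has_vector_derivative f' s u) (at u)"
    "good N (Suc a) (b+2) l f'" "bnd a b l f" by auto
  from Suc.prems(2) obtain g' where g': "\<forall>s u. 0 < u \<longrightarrow> (g s has_vector_derivative g' s u) (at u)"
    "good N (Suc a') (b'+2) l' g'" "bnd a' b' l' g" by auto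
  have fN: "good N a b l f" and gN: "good N a' b' l' g" using Suc.prems good_down by auto
  have 1: "good N (Suc (a + a')) (b + b' + 2) (l + l') (\<lambda>s u. f s u * g' s u)"
    using Suc.IH[OF fN g'(2)] by (simp add: add.assoc)
  have 2: "good N (Suc (a + a')) (b + b' + 2) (l + l') (\<lambda>s u. f' s u * g s u)"
    using Suc.IH[OF f'(2) gN] by (simp add: add.assoc add.commute add.left_commute)
  show ?case
    apply (simp add: bnd_mult f' g')
    apply (rule exI[of _ "\<lambda>s u. f s u * g' s u + f' s u * g s u"])
    using f' g' good_add[OF 1 2] by (auto intro!: has_vector_derivative_mult)
qed

lemma nderiv_Suc': "nderiv (Suc n) f = nderiv n (\<lambda>x. vector_derivative f (at x))"
proof (induction n arbitrary: f)
  case 0 then show ?case by simp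
next
  case (Suc n)
  have "nderiv (Suc (Suc n)) f = (\<lambda>x. vector_derivative (nderiv (Suc n) f) (at x))" by simp
  also have "\<dots> = (\<lambda>x. vector_derivative (nderiv n (\<lambda>x. vector_derivative f (at x))) (at x))"
    by (simp only: Suc.IH)
  finally show ?case by simp
qed

lemma vd_cong_open:
  assumes "open S" "\<And>x. x \<in> S \<Longrightarrow> f x = g x" "x \<in> S"
  shows "vector_derivative f (at x) = vector_derivative g (at x)"
proof -
  have "(f has_vector_derivative D) (at x) \<longleftrightarrow> (g has_vector_derivative D) (at x)" for D
    using has_vector_derivative_transform_within_open[of f D x S g]
      has_vector_derivative_transform_within_open[of g D x S f] assms by auto
  then show ?thesis unfolding vector_derivative_def by simp
qed

lemma nderiv_cong_open:
  assumes "open S" "\<And>x. x \<in> S \<Longrightarrow> f x = g x" "x \<in> S"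
  shows "nderiv n f x = nderiv n g x"
  using assms
proof (induction n arbitrary: f g x)
  case 0 then show ?case by simp
next
  case (Suc n)
  show ?case unfolding nderiv_Suc'
    apply (rule Suc.IH[OF Suc.prems(1) _ Suc.prems(3)])
    using vd_cong_open[OF Suc.prems(1,2)] by auto
qed

lemma good_nderiv:
  "good N a b l f \<Longrightarrow> n \<le> N \<Longrightarrow>
   \<exists>C. \<forall>s u. RR s u \<longrightarrow> cmod (nderiv n (f s) u) \<le> C * LL s ^ l * cmod s ^ (a+n) / u ^ (b+2*n)"
proof (induction N arbitrary: n a b f)
  case 0 then have "n = 0" "bnd a b l f" by auto
  then show ?case unfolding bnd_def by auto
next
  case (Suc N)
  from Suc.prems(1) obtain f' where f': "\<forall>s u. 0 < u \<longrightarrow> (f s has_vector_derivative f' s u) (at u)"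
    "good N (Suc a) (b+2) l f'" "bnd a b l f" by auto
  show ?case
  proof (cases n)
    case 0 then show ?thesis using f'(3) unfolding bnd_def by auto
  next
    case (Suc k)
    then have "k \<le> N" using Suc.prems by simp
    from Suc.IH[OF f'(2) this] obtain C where
      C: "\<forall>s u. RR s u \<longrightarrow> cmod (nderiv k (f' s) u) \<le> C * LL s ^ l * cmod s ^ (Suc a + k) / u ^ (b + 2 + 2 * k)"
      by blast
    { fix s u assume r: "RR s u"
      have "nderiv n (f s) u = nderiv k (\<lambda>x. vector_derivative (f s) (at x)) u"
        unfolding Suc nderiv_Suc' by (rule refl)
      also have "\<dots> = nderiv k (f' s) u"
        apply (rule nderiv_cong_open[of "{0<..}"])
        using f' RR_facts[OF r] by (auto intro: vector_derivative_at)
      finally have "cmod (nderiv n (f s) u) \<le> C * LL s ^ l * cmod s ^ (a + n) / u ^ (b + 2 * n)"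
        using C r Suc by simp }
    then show ?thesis by blast
  qed
qed



definition hh :: "complex \<Rightarrow> real \<Rightarrow> complex" where
  "hh s t = (if t = 0 then s else (1 - exp (-(complex_of_real t * s))) / complex_of_real t)"

lemma hh_alt: "s \<noteq> 0 \<Longrightarrow> t \<noteq> 0 \<Longrightarrow>
   s * ((exp (-(complex_of_real t * s)) - 1) / (-(complex_of_real t * s))) = hh s t"
  unfolding hh_def by (simp add: divide_simps)

lemma hh_cont0: "isCont (hh s) 0"
proof (cases "s = 0")
  case True
  then have "hh s = (\<lambda>_. 0)" by (auto simp: hh_def fun_eq_iff)
  then show ?thesis by simp
next
  case False
  have lim: "filterlim (\<lambda>t::real. -(complex_of_real t * s)) (at 0) (at 0)"
  proof (rule filterlim_atI)
    show "((\<lambda>t::real. -(complex_of_real t * s)) \<longlongrightarrow> 0) (at 0)"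
      by (auto intro!: tendsto_eq_intros)
    show "\<forall>\<^sub>F t in at (0::real). -(complex_of_real t * s) \<noteq> 0"
      using False by (auto simp: eventually_at_filter)
  qed
  have "((\<lambda>t. s * ((exp (-(complex_of_real t * s)) - 1) / (-(complex_of_real t * s)))) \<longlongrightarrow> s * 1) (at 0)"
    by (intro tendsto_mult tendsto_const filterlim_compose[OF lim_exp_minus_1 lim])
  then have 1: "((\<lambda>t. s * ((exp (-(complex_of_real t * s)) - 1) / (-(complex_of_real t * s)))) \<longlongrightarrow> s) (at 0)"
    by simp
  have 2: "\<forall>\<^sub>F t in at (0::real). s * ((exp (-(complex_of_real t * s)) - 1) / (-(complex_of_real t * s))) = hh s t"
    unfolding eventually_at_filter by (intro always_eventually allI impI hh_alt[OF False])
  have "(hh s \<longlongrightarrow> s) (at 0)"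
    by (rule Lim_transform_eventually[OF 1 2])
  then show ?thesis unfolding isCont_def by (simp add: hh_def)
qed

lemma hh_cont: "continuous_on UNIV (hh s)"
proof -
  have "isCont (hh s) t" for t
  proof (cases "t = 0")
    case True then show ?thesis using hh_cont0 by simp
  next
    case False
    have c: "isCont (\<lambda>t. (1 - exp (-(complex_of_real t * s))) / complex_of_real t) t"
      using False by (intro continuous_intros) auto
    have ev: "\<forall>\<^sub>F y in nhds t. (1 - exp (-(complex_of_real y * s))) / complex_of_real y = hh s y"
    proof -
      have "\<forall>\<^sub>F y in nhds t. y \<noteq> 0" using False by (rule t1_space_nhds)
      then show ?thesis by eventually_elim (simp add: hh_def)
    qed
    show ?thesis using isCont_cong[OF ev, THEN iffD1, OF c] .
  qed
  then show ?thesis by (simp add: continuous_on_eq_continuous_at)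
qed



lemma G_hh: "G v s = integral {0..1/v} (hh s)"
  unfolding G_def
  by (rule integral_spike[of "{0}"]) (simp_all add: hh_def)

lemma F_deriv:
  assumes "0 < w"
  shows "((\<lambda>w. integral {0..w} (hh s)) has_vector_derivative hh s w) (at w)"
proof -
  have c: "continuous_on {0..w+1} (hh s)" by (rule continuous_on_subset[OF hh_cont]) simp
  have m: "w \<in> {0..w+1}" using assms by simp
  have "((\<lambda>w. integral {0..w} (hh s)) has_vector_derivative hh s w) (at w within {0..w+1})"
    by (rule integral_has_vector_derivative[OF c m])
  then have "((\<lambda>w. integral {0..w} (hh s)) has_vector_derivative hh s w) (at w within {0<..<w+1})"
    by (rule has_vector_derivative_within_subset) (rule greaterThanLessThan_subseteq_atLeastAtMost_iff[THEN iffD2], simp)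
  moreover have "at w within {0<..<w+1} = at w" 
    by (rule at_within_open) (use assms in auto)
  ultimately show ?thesis by simp
qed


lemma hh_inv: assumes "0 < u" shows "hh s (1/u) = (1 - exp (-(s / complex_of_real u))) * complex_of_real u"
proof -
  have "complex_of_real (1/u) * s = s / complex_of_real u" by (simp add: of_real_divide)
  then show ?thesis using assms by (simp add: hh_def of_real_divide)
qed

lemma alg: fixes E U :: complex and u :: real assumes "U = complex_of_real u" "u \<noteq> 0"
  shows "(- 1 / u^2) *\<^sub>R ((1 - E) * U) = (E - 1) * (1 / U)"
  using assms by (simp add: scaleR_conv_of_real field_simps power2_eq_square)

lemma G_deriv:
  assumes "0 < u"
  shows "((\<lambda>v. G v s) has_vector_derivative (exp (-(s / complex_of_real u)) - 1) * (1 / complex_of_real u)) (at u)"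
proof -
  have d1: "((\<lambda>v::real. 1 / v) has_vector_derivative (- 1 / u^2)) (at u)"
    using assms unfolding has_real_derivative_iff_has_vector_derivative[symmetric]
    by (auto intro!: derivative_eq_intros simp: power2_eq_square)
  have d2: "((\<lambda>w. integral {0..w} (hh s)) has_vector_derivative hh s (1/u)) (at ((\<lambda>v::real. 1 / v) u))"
    using F_deriv[of "1/u" s] assms by simp
  have "(((\<lambda>w. integral {0..w} (hh s)) \<circ> (\<lambda>v::real. 1 / v)) has_vector_derivative (- 1 / u^2) *\<^sub>R hh s (1/u)) (at u)"
    by (rule vector_diff_chain_at[OF d1 d2])
  moreover have "(- 1 / u^2) *\<^sub>R hh s (1/u) = (exp (-(s / complex_of_real u)) - 1) * (1 / complex_of_real u)"
    unfolding hh_inv[OF assms] by (rule alg) (use assms in auto)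
  ultimately have "(((\<lambda>w. integral {0..w} (hh s)) \<circ> (\<lambda>v::real. 1 / v)) has_vector_derivative (exp (-(s / complex_of_real u)) - 1) * (1 / complex_of_real u)) (at u)"
    by simp
  then show ?thesis
    apply (rule has_vector_derivative_transform_within_open[of _ _ _ "{0<..}"])
    using assms by (auto simp: G_hh)
qed


lemma hh_small: assumes "0 \<le> t" "t * cmod s \<le> 1/2" shows "cmod (hh s t) \<le> 3/2 * cmod s"
proof (cases "t = 0")
  case True then show ?thesis by (simp add: hh_def)
next
  case False
  then have tp: "t > 0" using assms by simp
  have nz: "norm (-(complex_of_real t * s)) \<le> 1/2" using assms tp by (simp add: norm_mult)
  have "cmod (exp (-(complex_of_real t * s)) - 1) \<le> 3/2 * norm (-(complex_of_real t * s))"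
    by (rule norm_exp_bounds(2)[OF nz])
  also have "\<dots> = 3/2 * t * cmod s" using tp by (simp add: norm_mult)
  finally have 1: "cmod (1 - exp (-(complex_of_real t * s))) \<le> 3/2 * t * cmod s"
    by (simp add: norm_minus_commute)
  have "cmod (hh s t) = cmod (1 - exp (-(complex_of_real t * s))) / t"
    using tp by (simp add: hh_def norm_divide)
  also have "\<dots> \<le> (3/2 * t * cmod s) / t" using 1 tp by (intro divide_right_mono) auto
  also have "\<dots> = 3/2 * cmod s" using tp by simp
  finally show ?thesis .
qed

lemma hh_large: assumes "0 < t" "Re s = 1" shows "cmod (hh s t) \<le> 2 / t"
proof -
  have "cmod (1 - exp (-(complex_of_real t * s))) \<le> 1 + cmod (exp (-(complex_of_real t * s)))"
    by (rule order_trans[OF norm_triangle_ineq4]) simp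
  also have "cmod (exp (-(complex_of_real t * s))) = exp (- t)" using assms by simp
  also have "exp (-t) \<le> 1" using assms by simp
  finally have 1: "cmod (1 - exp (-(complex_of_real t * s))) \<le> 2" by simp
  have "cmod (hh s t) = cmod (1 - exp (-(complex_of_real t * s))) / t"
    using assms by (simp add: hh_def norm_divide)
  also have "\<dots> \<le> 2 / t" using 1 assms by (intro divide_right_mono) auto
  finally show ?thesis .
qed

lemma G_bound: assumes r: "RR s u" shows "cmod (G u s) \<le> 3 * LL s"
proof -
  note F = RR_facts[OF r]
  have re: "Re s = 1" using r by (simp add: RR_def)
  define a where "a = cmod s"
  define c where "c = 1 / (2 * a)"
  define b where "b = 1 / u"
  have a1: "a > 1" using F a_def by simp
  have c0: "0 < c" using a1 c_def by simp
  have cb: "c \<le> b" unfolding c_def b_def using F a_def a1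
    by (simp add: divide_simps)
  have int: "hh s integrable_on {0..b}"
    by (rule integrable_continuous_interval, rule continuous_on_subset[OF hh_cont]) simp
  have split: "integral {0..c} (hh s) + integral {c..b} (hh s) = integral {0..b} (hh s)"
    using c0 cb int by (intro Henstock_Kurzweil_Integration.integral_combine) auto
  have p1: "norm (integral {0..c} (hh s)) \<le> (3/2 * a) * (c - 0)"
  proof (rule integral_bound)
    show "0 \<le> c" using c0 by simp
    show "continuous_on {0..c} (hh s)" by (rule continuous_on_subset[OF hh_cont]) simp
    fix t assume t: "t \<in> {0..c}"
    have "t * a \<le> c * a" using t a1 by (intro mult_right_mono) auto
    also have "c * a = 1/2" using a1 unfolding c_def by simp
    finally show "norm (hh s t) \<le> 3/2 * a" using hh_small[of t s] t a_def by simp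
  qed
  have p1': "(3/2 * a) * (c - 0) = 3/4" using a1 unfolding c_def by simp
  have lnint: "((\<lambda>t. 2 / t) has_integral (2 * ln b - 2 * ln c)) {c..b}"
  proof (rule fundamental_theorem_of_calculus[OF cb])
    fix x assume x: "x \<in> {c..b}"
    then have "x > 0" using c0 by simp
    then have "((\<lambda>t. 2 * ln t) has_real_derivative 2 / x) (at x within {c..b})"
      by (auto intro!: derivative_eq_intros)
    then show "((\<lambda>t. 2 * ln t) has_vector_derivative 2 / x) (at x within {c..b})"
      by (simp add: has_real_derivative_iff_has_vector_derivative)
  qed
  have p2: "norm (integral {c..b} (hh s)) \<le> integral {c..b} (\<lambda>t. 2 / t)"
  proof (rule integral_norm_bound_integral)
    show "hh s integrable_on {c..b}"
      by (rule integrable_continuous_interval, rule continuous_on_subset[OF hh_cont]) simp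
    show "(\<lambda>t. 2 / t) integrable_on {c..b}" using lnint by blast
    fix t assume "t \<in> {c..b}"
    then have "t > 0" using c0 by simp
    then show "norm (hh s t) \<le> 2 / t" using hh_large re by simp
  qed
  have p2': "integral {c..b} (\<lambda>t. 2 / t) = 2 * ln b - 2 * ln c" using lnint by (rule integral_unique)
  have lb: "ln b \<le> 0" unfolding b_def using F by simp
  have lc: "ln c = - ln 2 - ln a" unfolding c_def using a1 by (simp add: ln_div ln_mult)
  have l2: "ln (2::real) < 1" by (rule ln_2_less_1)
  have la: "0 \<le> ln a" using a1 by simp
  have "cmod (G u s) = norm (integral {0..c} (hh s) + integral {c..b} (hh s))"
    unfolding split by (simp add: G_hh b_def)
  also have "\<dots> \<le> norm (integral {0..c} (hh s)) + norm (integral {c..b} (hh s))"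
    by (rule norm_triangle_ineq)
  also have "\<dots> \<le> 3/4 + (2 * ln b - 2 * ln c)" using p1 p1' p2 p2' by linarith
  also have "\<dots> \<le> 3 * LL s" unfolding LL_def a_def[symmetric] distrib_left using lb lc l2 la by linarith
  finally show ?thesis .
qed



lemma good_cong: "good N a b l f \<Longrightarrow> f = g \<Longrightarrow> good N a b l g" by simp

lemma fI_deriv: assumes "0 < u"
  shows "((\<lambda>u. 1 / complex_of_real u) has_vector_derivative
           (- 1) * (1 / complex_of_real u * (1 / complex_of_real u))) (at u)"
proof -
  have "((\<lambda>z::complex. 1 / z) has_field_derivative (- 1) * (1 / complex_of_real u * (1 / complex_of_real u))) (at (complex_of_real u))"
    using assms by (auto intro!: derivative_eq_intros simp: power2_eq_square)
  from has_vector_derivative_real_field[OF this] show ?thesis by simp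
qed

lemma bnd_fI: "bnd 0 1 0 (\<lambda>s u. 1 / complex_of_real u)"
  unfolding bnd_def
proof (intro exI[of _ 1] conjI allI impI)
  fix s u assume "RR s u"
  then have "0 < u" by (rule RR_facts)
  then show "cmod (1 / complex_of_real u) \<le> 1 * LL s ^ 0 * cmod s ^ 0 / u ^ 1"
    by (simp add: norm_divide)
qed simp

lemma good_idx: "good N a b l f \<Longrightarrow> a = a' \<Longrightarrow> b = b' \<Longrightarrow> l = l' \<Longrightarrow> good N a' b' l' f"
  by simp

lemma good_fI: "good N 0 1 0 (\<lambda>s u. 1 / complex_of_real u)"
proof (induction N)
  case 0 then show ?case using bnd_fI by simp
next
  case (Suc N)
  have A: "good N (0+0) (1+1) (0+0) (\<lambda>s u. 1 / complex_of_real u * (1 / complex_of_real u))"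
    by (rule good_mult[OF Suc.IH Suc.IH])
  have B: "good N (Suc (0+0)) (Suc (1+1)) (0+0) (\<lambda>s u. (-1) * (1 / complex_of_real u * (1 / complex_of_real u)))"
    by (rule good_weak[OF good_cmult[OF A]])
  have C: "good N (Suc 0) (1+2) 0 (\<lambda>s u. (-1) * (1 / complex_of_real u * (1 / complex_of_real u)))"
    by (rule good_idx[OF B]) simp_all
  show ?case
    apply (simp only: good.simps)
    apply (intro conjI exI[of _ "\<lambda>s u. (-1) * (1 / complex_of_real u * (1 / complex_of_real u))"])
    using bnd_fI fI_deriv C by auto
qed

lemma fE_deriv: assumes "0 < u"
  shows "((\<lambda>u. exp (-(s / complex_of_real u))) has_vector_derivative
           exp (-(s / complex_of_real u)) * (s * (1 / complex_of_real u * (1 / complex_of_real u)))) (at u)"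
proof -
  have i: "((\<lambda>z::complex. 1 / z) has_field_derivative (- 1) * (1 / complex_of_real u * (1 / complex_of_real u))) (at (complex_of_real u))"
    using assms by (auto intro!: derivative_eq_intros simp: power2_eq_square)
  have d: "((\<lambda>z::complex. (-s) * (1 / z)) has_field_derivative (-s) * ((- 1) * (1 / complex_of_real u * (1 / complex_of_real u)))) (at (complex_of_real u))"
    by (rule DERIV_cmult[OF i])
  have "((\<lambda>z::complex. exp ((-s) * (1 / z))) has_field_derivative exp ((-s) * (1 / complex_of_real u)) * ((-s) * ((- 1) * (1 / complex_of_real u * (1 / complex_of_real u))))) (at (complex_of_real u))"
    by (rule DERIV_chain2[OF DERIV_exp d])
  from has_vector_derivative_real_field[OF this] 
  have "((\<lambda>x. exp ((-s) * (1 / complex_of_real x))) has_vector_derivative exp ((-s) * (1 / complex_of_real u)) * ((-s) * ((- 1) * (1 / complex_of_real u * (1 / complex_of_real u))))) (at u)" .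
  moreover have "(\<lambda>x. exp ((-s) * (1 / complex_of_real x))) = (\<lambda>u. exp (-(s / complex_of_real u)))"
    by (simp add: fun_eq_iff)
  moreover have "exp ((-s) * (1 / complex_of_real u)) * ((-s) * ((- 1) * (1 / complex_of_real u * (1 / complex_of_real u))))
     = exp (-(s / complex_of_real u)) * (s * (1 / complex_of_real u * (1 / complex_of_real u)))"
    by simp
  ultimately show ?thesis by simp
qed
lemma bnd_fE: "bnd 0 0 0 (\<lambda>s u. exp (-(s / complex_of_real u)))"
  unfolding bnd_def
proof (intro exI[of _ 1] conjI allI impI)
  fix s u assume r: "RR s u"
  have u: "0 < u" by (rule RR_facts(4)[OF r])
  have rs: "Re s = 1" using r unfolding RR_def by blast
  have 1: "cmod (exp (-(s / complex_of_real u))) = exp (Re (-(s / complex_of_real u)))"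
    by (rule norm_exp_eq_Re)
  have 2: "Re (-(s / complex_of_real u)) = - (Re s / u)" by (simp only: Re_divide_of_real uminus_complex.sel)
  have 3: "- (Re s / u) \<le> 0" using u rs by simp
  have "cmod (exp (-(s / complex_of_real u))) \<le> 1" unfolding 1 2 using 3 by (simp only: exp_le_one_iff)
  then show "cmod (exp (-(s / complex_of_real u))) \<le> 1 * LL s ^ 0 * cmod s ^ 0 / u ^ 0"
    by simp
qed simp

lemma good_fE: "good N 0 0 0 (\<lambda>s u. exp (-(s / complex_of_real u)))"
proof (induction N)
  case 0 then show ?case using bnd_fE by simp
next
  case (Suc N)
  have A: "good N (0 + (1 + (0 + 0))) (0 + (0 + (1 + 1))) (0 + (0 + (0 + 0)))
     (\<lambda>s u. exp (-(s / complex_of_real u)) * (s * (1 / complex_of_real u * (1 / complex_of_real u))))"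
    by (intro good_mult Suc.IH good_s good_fI)
  have C: "good N (Suc 0) (0 + 2) 0
     (\<lambda>s u. exp (-(s / complex_of_real u)) * (s * (1 / complex_of_real u * (1 / complex_of_real u))))"
    by (rule good_idx[OF A]) simp_all
  show ?case
    apply (simp only: good.simps)
    apply (intro conjI exI[of _ "\<lambda>s u. exp (-(s / complex_of_real u)) * (s * (1 / complex_of_real u * (1 / complex_of_real u)))"])
    using bnd_fE fE_deriv C by auto
qed

definition fD :: "complex \<Rightarrow> real \<Rightarrow> complex" where
  "fD s u = (exp (-(s / complex_of_real u)) - 1) * (1 / complex_of_real u)"

lemma good_fD: "good N 0 1 0 fD"
proof -
  have "good N 0 0 0 (\<lambda>s u. exp (-(s / complex_of_real u)) + (-1))"
    by (intro good_add good_fE good_const)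
  from good_mult[OF this good_fI] have "good N (0+0) (0+1) (0+0)
     (\<lambda>s u. (exp (-(s / complex_of_real u)) + (-1)) * (1 / complex_of_real u))" .
  then have "good N 0 1 0 (\<lambda>s u. (exp (-(s / complex_of_real u)) + (-1)) * (1 / complex_of_real u))"
    by (rule good_idx) simp_all
  then show ?thesis by (rule good_cong) (simp add: fD_def fun_eq_iff)
qed

lemma bnd_G: "bnd 0 0 1 (\<lambda>s u. G u s)"
  unfolding bnd_def using G_bound by (intro exI[of _ 3]) auto

lemma good_G: "good N 0 0 1 (\<lambda>s u. G u s)"
proof (cases N)
  case 0 then show ?thesis using bnd_G by simp
next
  case (Suc K)
  have "good K (Suc 0) (Suc 1) 0 fD" using good_weak[OF good_fD] by simp
  then have "good K (Suc 0) (0+2) 1 fD" using good_mono by fastforce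
  moreover have "bnd 0 0 1 (\<lambda>s u. G u s)" by (rule bnd_G)
  ultimately show ?thesis unfolding Suc good.simps
    apply (intro conjI exI[of _ fD])
      apply assumption
    using G_deriv[folded fD_def] apply blast
    apply assumption
    done
qed

lemma good_Gpow: "good N 0 0 k (\<lambda>s u. (G u s) ^ k)"
proof (induction k)
  case 0 then show ?case using good_const[of N 1] by simp
next
  case (Suc k)
  from good_mult[OF good_G Suc.IH] show ?case by simp
qed

lemma good_P: "good N 0 1 (m - 1) (\<lambda>s u. of_nat m * ((G u s) ^ (m - 1) * fD s u))"
  using good_cmult[OF good_mult[OF good_Gpow good_fD]] by simp

lemma Gpow_deriv: assumes "0 < u"
  shows "((\<lambda>v. (G v s) ^ m) has_vector_derivative of_nat m * ((G u s) ^ (m - 1) * fD s u)) (at u)"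
proof -
  have "(((\<lambda>w. w ^ m) \<circ> (\<lambda>v. G v s)) has_vector_derivative fD s u * (of_nat m * (G u s) ^ (m - 1))) (at u)"
    by (rule field_vector_diff_chain_at[OF G_deriv[OF assms, folded fD_def]])
       (auto intro!: derivative_eq_intros)
  then show ?thesis by (simp add: o_def ac_simps)
qed

theorem lemma9:
  fixes m \<nu> :: nat
  assumes "m \<ge> 1" and "\<nu> \<ge> 1"
  shows "\<exists>C>0. \<forall>(u::real) (s::complex).
           Re s = 1 \<longrightarrow> u \<ge> 1 \<longrightarrow> cmod s > u \<longrightarrow>
           cmod (nderiv \<nu> (\<lambda>v. (G v s) ^ m) u)
             \<le> C * (1 + ln (cmod s)) ^ (m - 1) / u ^ \<nu> * (cmod s / u) ^ (\<nu> - 1)"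
proof -
  define k where "k = \<nu> - 1"
  have nu: "\<nu> = Suc k" using assms k_def by simp
  obtain C where C: "\<forall>s u. RR s u \<longrightarrow> cmod (nderiv k (\<lambda>u. of_nat m * ((G u s) ^ (m - 1) * fD s u)) u)
      \<le> C * LL s ^ (m - 1) * cmod s ^ (0 + k) / u ^ (1 + 2 * k)"
    using good_nderiv[OF good_P[of k m], of k] by auto
  show ?thesis
  proof (intro exI[of _ "max C 1"] conjI allI impI)
    fix u :: real and s :: complex
    assume h: "Re s = 1" "1 \<le> u" "u < cmod s"
    then have r: "RR s u" by (simp add: RR_def)
    note F = RR_facts[OF r]
    have "nderiv \<nu> (\<lambda>v. (G v s) ^ m) u = nderiv k (\<lambda>x. vector_derivative (\<lambda>v. (G v s) ^ m) (at x)) u"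
      unfolding nu nderiv_Suc' by (rule refl)
    also have "\<dots> = nderiv k (\<lambda>u. of_nat m * ((G u s) ^ (m - 1) * fD s u)) u"
      by (rule nderiv_cong_open[of "{0<..}"]) (use F Gpow_deriv in \<open>auto intro: vector_derivative_at\<close>)
    finally have eq: "nderiv \<nu> (\<lambda>v. (G v s) ^ m) u = nderiv k (\<lambda>u. of_nat m * ((G u s) ^ (m - 1) * fD s u)) u" .
    have X0: "0 \<le> LL s ^ (m - 1) * cmod s ^ k / u ^ (1 + 2 * k)" using F by simp
    have "cmod (nderiv k (\<lambda>u. of_nat m * ((G u s) ^ (m - 1) * fD s u)) u)
      \<le> C * LL s ^ (m - 1) * cmod s ^ (0 + k) / u ^ (1 + 2 * k)" using C r by blast
    also have "\<dots> = C * (LL s ^ (m - 1) * cmod s ^ k / u ^ (1 + 2 * k))" by simp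
    finally have "cmod (nderiv \<nu> (\<lambda>v. (G v s) ^ m) u) \<le> C * (LL s ^ (m - 1) * cmod s ^ k / u ^ (1 + 2 * k))"
      unfolding eq .
    also have "\<dots> \<le> max C 1 * (LL s ^ (m - 1) * cmod s ^ k / u ^ (1 + 2 * k))"
      by (rule mult_right_mono[OF _ X0]) simp
    also have "\<dots> = max C 1 * (1 + ln (cmod s)) ^ (m - 1) / u ^ \<nu> * (cmod s / u) ^ (\<nu> - 1)"
    proof -
      have e0: "1 + 2 * k = Suc k + k" by simp
      have e1: "u ^ (1 + 2 * k) = u ^ Suc k * u ^ k" unfolding e0 by (rule power_add)
      have gen: "M * (A * B / (X * Y)) = M * A / X * (B / Y)" for M A B X Y :: real by simp
      show ?thesis unfolding e1 nu LL_def power_divide diff_Suc_1 by (rule gen)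
    qed
    finally show "cmod (nderiv \<nu> (\<lambda>v. (G v s) ^ m) u) \<le> max C 1 * (1 + ln (cmod s)) ^ (m - 1) / u ^ \<nu> * (cmod s / u) ^ (\<nu> - 1)" .
  qed simp
qed


end
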